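(* For every $\vec\lambda=(\lambda_1,\lambda_2,\lambda_3)\in\mathbb R^3$ there exist smooth symmetric $(0,2)$-tensors $\sigma,\tau$ on $\mathbb R^3$ with compact support in $A_1=\{1<|x|<2\}$, satisfying $\sigma(x)=\sigma(-x)$ and $\tau(x)=\tau(-x)$, such that \[L\sigma=0,\qquad \sum_i\tau_{ij,i}=0\ \ (j=1,2,3),\] and \[\int_{A_1}\Big[\tfrac12\tau_{ij,l}(Y_k)^l+\tau_{il}(Y_k)^l_{,j}\Big]\sigma_{ij}\,dx=\lambda_k\quad(k=1,2,3),\] with summation over $i,j,l$, where $Y_k=\frac{\partial}{\partial x^k}\times\vec x$.
   Context: Cartesian coordinates on $\mathbb R^3$; commas denote partial derivatives, and $\times$ the cross product. $L\sigma=\sum_{i,j}(\sigma_{ij,ij}-\sigma_{ii,jj})$ is the linearization of scalar curvature at the Euclidean metric. $\sigma(x)=\sigma(-x)$ means the Cartesian components are even functions. *)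

theory Defs
  imports "HOL-Analysis.Analysis"
begin

definition pd :: "3 \<Rightarrow> (real^3 \<Rightarrow> real) \<Rightarrow> real^3 \<Rightarrow> real" where
  "pd i f x = frechet_derivative f (at x) (axis i 1)"

fun iter_pd :: "3 list \<Rightarrow> (real^3 \<Rightarrow> real) \<Rightarrow> real^3 \<Rightarrow> real" where
  "iter_pd [] f = f"
| "iter_pd (i # ds) f = pd i (iter_pd ds f)"

definition smooth :: "(real^3 \<Rightarrow> real) \<Rightarrow> bool" where
  "smooth f \<longleftrightarrow> (\<forall>ds. (\<forall>x. iter_pd ds f differentiable (at x)) \<and> continuous_on UNIV (iter_pd ds f))"

definition smooth_sym_tensor :: "(real^3 \<Rightarrow> real^3^3) \<Rightarrow> bool" where
  "smooth_sym_tensor \<sigma> \<longleftrightarrow>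
     (\<forall>i j. smooth (\<lambda>x. \<sigma> x $ i $ j)) \<and> (\<forall>x i j. \<sigma> x $ i $ j = \<sigma> x $ j $ i)"

definition tsupport :: "(real^3 \<Rightarrow> real^3^3) \<Rightarrow> (real^3) set" where
  "tsupport \<sigma> = closure {x. \<sigma> x \<noteq> 0}"

definition A1 :: "(real^3) set" where
  "A1 = {x. 1 < norm x \<and> norm x < 2}"

definition Lin :: "(real^3 \<Rightarrow> real^3^3) \<Rightarrow> real^3 \<Rightarrow> real" where
  "Lin \<sigma> x = (\<Sum>i\<in>UNIV. \<Sum>j\<in>UNIV.
      pd j (pd i (\<lambda>y. \<sigma> y $ i $ j)) x - pd j (pd j (\<lambda>y. \<sigma> y $ i $ i)) x)"

definition Y :: "3 \<Rightarrow> real^3 \<Rightarrow> real^3" where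
  "Y k x = cross3 (axis k 1) x"

end

theory Submission
  imports Defs "HOL-Computational_Algebra.Polynomial"
begin


lemma poly_exp_lim: "((\<lambda>u. poly p u * exp (-u)) \<longlongrightarrow> (0::real)) at_top"
proof -
  have eq: "(\<lambda>u. poly p u * exp (-u)) = (\<lambda>u. \<Sum>i\<le>degree p. coeff p i * (u ^ i / exp u))"
    by (rule ext) (simp add: poly_altdef sum_distrib_right exp_minus divide_inverse mult.assoc)
  show ?thesis unfolding eq
    by (rule tendsto_null_sum) (intro tendsto_mult_right_zero tendsto_power_div_exp_0)
qed

fun BP :: "nat \<Rightarrow> real poly" where
  "BP 0 = 1"
| "BP (Suc n) = [:0,0,1:] * (BP n - pderiv (BP n))"

definition bet :: "nat \<Rightarrow> real \<Rightarrow> real" where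
  "bet n t = (if t > 0 then poly (BP n) (1/t) * exp (-1/t) else 0)"

lemma bet_pos_deriv:
  assumes "t > 0"
  shows "((\<lambda>t. poly (BP n) (1/t) * exp (-1/t)) has_real_derivative
           poly (BP (Suc n)) (1/t) * exp (-1/t)) (at t)"
proof -
  have "((\<lambda>t. poly (BP n) (1/t) * exp (-1/t)) has_real_derivative
      (poly (pderiv (BP n)) (1/t) * (- 1 / t^2)) * exp (-1/t) + poly (BP n) (1/t) * (exp (-1/t) * (1/t^2))) (at t)"
    using assms
    by (auto intro!: derivative_eq_intros DERIV_chain2[OF poly_DERIV] simp: power2_eq_square)
  moreover have "(poly (pderiv (BP n)) (1/t) * (- 1 / t^2)) * exp (-1/t) + poly (BP n) (1/t) * (exp (-1/t) * (1/t^2))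
     = poly (BP (Suc n)) (1/t) * exp (-1/t)"
    by (simp add: algebra_simps power2_eq_square)
  ultimately show ?thesis by simp
qed

lemma bet_deriv: "(bet n has_real_derivative bet (Suc n) t) (at t)"
proof -
  consider "t > 0" | "t < 0" | "t = 0" by linarith
  then show ?thesis
  proof cases
    case 1
    have "(bet n has_real_derivative poly (BP (Suc n)) (1/t) * exp (-1/t)) (at t)"
      apply (rule has_field_derivative_transform_within_open[OF bet_pos_deriv[OF 1], of "{0<..}"])
      using 1 by (auto simp: bet_def)
    then show ?thesis using 1 by (simp add: bet_def)
  next
    case 2
    show ?thesis
      apply (rule has_field_derivative_transform_within_open[of "\<lambda>_. 0" _ _ "{..<0}"])
      using 2 by (auto simp: bet_def)
  next
    case 3
    have L: "((\<lambda>y. (bet n y - bet n 0) / (y - 0)) \<longlongrightarrow> 0) (at_left 0)"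
    proof (rule tendsto_eventually)
      show "\<forall>\<^sub>F y in at_left 0. (bet n y - bet n 0) / (y - 0) = 0"
        unfolding eventually_at_left_field by (rule exI[of _ "-1"]) (simp add: bet_def)
    qed
    have R: "((\<lambda>y. (bet n y - bet n 0) / (y - 0)) \<longlongrightarrow> 0) (at_right 0)"
    proof -
      have lim: "((\<lambda>u. poly ([:0,1:] * BP n) u * exp (-u)) \<longlongrightarrow> (0::real)) at_top"
        by (rule poly_exp_lim)
      have ev: "\<forall>\<^sub>F x in at_top. poly ([:0,1:] * BP n) x * exp (-x) = (bet n (inverse x) - bet n 0) / (inverse x - 0)"
        using eventually_gt_at_top[of 0]
        by eventually_elim (simp add: bet_def divide_inverse mult_ac)
      have "((\<lambda>x. (bet n (inverse x) - bet n 0) / (inverse x - 0)) \<longlongrightarrow> 0) at_top"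
        using tendsto_cong[OF ev] lim by (simp only:)
      then show ?thesis unfolding filterlim_at_right_to_top .
    qed
    have "((\<lambda>y. (bet n y - bet n 0) / (y - 0)) \<longlongrightarrow> 0) (at 0)"
      using L R by (rule filterlim_split_at)
    moreover have "bet n 0 = 0" "bet (Suc n) 0 = 0" by (simp_all add: bet_def)
    ultimately show ?thesis using 3 unfolding has_field_derivative_iff by simp
  qed
qed

definition chain :: "(nat \<Rightarrow> real \<Rightarrow> real) \<Rightarrow> bool" where
  "chain g \<longleftrightarrow> (\<forall>n t. (g n has_real_derivative g (Suc n) t) (at t))"

lemma chain_bet: "chain bet"
  by (simp add: chain_def bet_deriv)

lemma bet_nonpos: "t \<le> 0 \<Longrightarrow> bet n t = 0"
  by (simp add: bet_def)



inductive_set SM :: "(real^3 \<Rightarrow> real) set" where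
  SM_const: "(\<lambda>x. c) \<in> SM"
| SM_coord: "(\<lambda>x. x $ i) \<in> SM"
| SM_add: "f \<in> SM \<Longrightarrow> g \<in> SM \<Longrightarrow> (\<lambda>x. f x + g x) \<in> SM"
| SM_mult: "f \<in> SM \<Longrightarrow> g \<in> SM \<Longrightarrow> (\<lambda>x. f x * g x) \<in> SM"
| SM_rad: "chain g \<Longrightarrow> (\<lambda>x. g n (c + d * (x \<bullet> x))) \<in> SM"

lemma SM_deriv:
  assumes "f \<in> SM"
  shows "\<exists>F. (\<forall>x. (f has_derivative F x) (at x)) \<and> (\<forall>i. (\<lambda>x. F x (axis i 1)) \<in> SM)"
  using assms
proof induction
  case (SM_const c)
  show ?case by (rule exI[of _ "\<lambda>x h. 0"]) (auto intro: SM.intros)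
next
  case (SM_coord i)
  show ?case
    apply (rule exI[of _ "\<lambda>x h. h $ i"])
    apply (auto intro!: bounded_linear_imp_has_derivative SM.intros)
    done
next
  case (SM_add f g)
  then obtain F G where F: "\<forall>x. (f has_derivative F x) (at x)" "\<forall>i. (\<lambda>x. F x (axis i 1)) \<in> SM"
    and G: "\<forall>x. (g has_derivative G x) (at x)" "\<forall>i. (\<lambda>x. G x (axis i 1)) \<in> SM" by blast
  show ?case
    apply (rule exI[of _ "\<lambda>x h. F x h + G x h"])
    using F G by (auto intro!: derivative_eq_intros SM.intros)
next
  case (SM_mult f g)
  then obtain F G where F: "\<forall>x. (f has_derivative F x) (at x)" "\<forall>i. (\<lambda>x. F x (axis i 1)) \<in> SM"
    and G: "\<forall>x. (g has_derivative G x) (at x)" "\<forall>i. (\<lambda>x. G x (axis i 1)) \<in> SM" by blast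
  show ?case
    apply (rule exI[of _ "\<lambda>x h. f x * G x h + F x h * g x"])
    using F G SM_mult.hyps by (auto intro!: derivative_eq_intros SM.intros)
next
  case (SM_rad g n c d)
  have gd: "\<And>t. (g n has_real_derivative g (Suc n) t) (at t)"
    using SM_rad unfolding chain_def by blast
  have D: "((\<lambda>x. g n (c + d * (x \<bullet> x))) has_derivative
     (\<lambda>h. g (Suc n) (c + d * (x \<bullet> x)) * (d * (h \<bullet> x + x \<bullet> h)))) (at x)" for x :: "real^3"
  proof -
    have "((\<lambda>x. c + d * (x \<bullet> x)) has_derivative (\<lambda>h. d * (h \<bullet> x + x \<bullet> h))) (at x)"
      by (auto intro!: derivative_eq_intros)
    from has_derivative_compose[OF this gd[unfolded has_field_derivative_def]]
    show ?thesis by (simp add: o_def)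
  qed
  show ?case
    apply (rule exI[of _ "\<lambda>x h. g (Suc n) (c + d * (x \<bullet> x)) * (d * (h \<bullet> x + x \<bullet> h))"])
    using D SM_rad by (auto simp: inner_axis inner_commute intro!: SM.intros)
qed

lemma SM_differentiable: "f \<in> SM \<Longrightarrow> f differentiable (at x)"
  using SM_deriv unfolding differentiable_def by blast

lemma pd_eq: "(f has_derivative F) (at x) \<Longrightarrow> pd i f x = F (axis i 1)"
  unfolding pd_def using frechet_derivative_at by metis

lemma pd_via: "(f has_derivative F) (at x) \<Longrightarrow> F (axis i 1) = v \<Longrightarrow> pd i f x = v"
  using pd_eq by metis

lemma has_derivative_coord: "((\<lambda>x::real^3. x $ j) has_derivative (\<lambda>h. h $ j)) (at x)"
  by (rule bounded_linear_imp_has_derivative) auto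

lemma pd_SM [simp]: "f \<in> SM \<Longrightarrow> pd i f \<in> SM"
proof -
  assume "f \<in> SM"
  then obtain F where F: "\<forall>x. (f has_derivative F x) (at x)" "\<forall>i. (\<lambda>x. F x (axis i 1)) \<in> SM"
    using SM_deriv by blast
  have "pd i f = (\<lambda>x. F x (axis i 1))"
    using F(1) pd_eq by blast
  then show ?thesis using F(2) by simp
qed

lemma SM_has_derivative: "f \<in> SM \<Longrightarrow> (f has_derivative frechet_derivative f (at x)) (at x)"
  using SM_differentiable frechet_derivative_works by blast

lemma SM_iter: "f \<in> SM \<Longrightarrow> iter_pd ds f \<in> SM"
  by (induction ds) auto

lemma SM_smooth: "f \<in> SM \<Longrightarrow> smooth f"
  unfolding smooth_def
proof (intro allI conjI)
  fix ds x assume "f \<in> SM"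
  then show "iter_pd ds f differentiable at x" using SM_iter SM_differentiable by blast
next
  fix ds assume "f \<in> SM"
  then show "continuous_on UNIV (iter_pd ds f)"
    using SM_iter SM_differentiable
    by (meson continuous_at_imp_continuous_on differentiable_imp_continuous_within)
qed

lemma SM_cont: "f \<in> SM \<Longrightarrow> continuous_on S f"
  using SM_differentiable
  by (meson continuous_at_imp_continuous_on differentiable_imp_continuous_within)

declare SM_const [simp] SM_coord [simp] SM_add [simp] SM_mult [simp]

lemma SM_uminus [simp]: "f \<in> SM \<Longrightarrow> (\<lambda>x. - f x) \<in> SM"
  using SM_mult[OF SM_const[of "-1"]] by simp

lemma SM_diff [simp]: "f \<in> SM \<Longrightarrow> g \<in> SM \<Longrightarrow> (\<lambda>x. f x - g x) \<in> SM"
  using SM_add[OF _ SM_uminus] by simp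

lemma pd_const [simp]: "pd i (\<lambda>x. c) = (\<lambda>x. 0)"
  by (rule ext, rule pd_via[OF has_derivative_const]) simp

lemma pd_coord [simp]: "pd i (\<lambda>x. x $ j) = (\<lambda>x. if i = j then 1 else 0)"
  by (rule ext, rule pd_via[OF has_derivative_coord]) (simp add: axis_def)

lemma pd_add [simp]: "f \<in> SM \<Longrightarrow> g \<in> SM \<Longrightarrow> pd i (\<lambda>x. f x + g x) = (\<lambda>x. pd i f x + pd i g x)"
  apply (rule ext, rule pd_via[OF has_derivative_add[OF SM_has_derivative SM_has_derivative]], assumption, assumption)
  apply (auto simp: pd_def)
  done

lemma pd_mult [simp]: "f \<in> SM \<Longrightarrow> g \<in> SM \<Longrightarrow> pd i (\<lambda>x. f x * g x) = (\<lambda>x. pd i f x * g x + f x * pd i g x)"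
  apply (rule ext, rule pd_via[OF has_derivative_mult[OF SM_has_derivative SM_has_derivative]], assumption, assumption)
  apply (auto simp: pd_def)
  done

lemma pd_uminus [simp]: "f \<in> SM \<Longrightarrow> pd i (\<lambda>x. - f x) = (\<lambda>x. - pd i f x)"
  apply (rule ext, rule pd_via[OF has_derivative_minus[OF SM_has_derivative]], assumption)
  apply (auto simp: pd_def)
  done

lemma pd_diff [simp]: "f \<in> SM \<Longrightarrow> g \<in> SM \<Longrightarrow> pd i (\<lambda>x. f x - g x) = (\<lambda>x. pd i f x - pd i g x)"
  apply (rule ext, rule pd_via[OF has_derivative_diff[OF SM_has_derivative SM_has_derivative]], assumption, assumption)
  apply (auto simp: pd_def)
  done

lemma pd_rad [simp]: "chain g \<Longrightarrow> pd i (\<lambda>x. g n (c + d * (x \<bullet> x))) = (\<lambda>x. g (Suc n) (c + d * (x \<bullet> x)) * (2 * d * x $ i))"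
proof (rule ext)
  fix x :: "real^3"
  assume "chain g"
  then have gd: "\<And>t. (g n has_real_derivative g (Suc n) t) (at t)"
    unfolding chain_def by blast
  have "((\<lambda>x. c + d * (x \<bullet> x)) has_derivative (\<lambda>h. d * (h \<bullet> x + x \<bullet> h))) (at x)"
    by (auto intro!: derivative_eq_intros)
  from has_derivative_compose[OF this gd[unfolded has_field_derivative_def]]
  have "((\<lambda>x. g n (c + d * (x \<bullet> x))) has_derivative
     (\<lambda>h. g (Suc n) (c + d * (x \<bullet> x)) * (d * (h \<bullet> x + x \<bullet> h)))) (at x)"
    by (simp add: o_def)
  from pd_eq[OF this, of i] show "pd i (\<lambda>x. g n (c + d * (x \<bullet> x))) x = g (Suc n) (c + d * (x \<bullet> x)) * (2 * d * x $ i)"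
    by (simp add: inner_axis inner_commute)
qed

lemma SM_rad' [simp]: "chain g \<Longrightarrow> (\<lambda>x. g n (c + d * (x \<bullet> x))) \<in> SM"
  by (rule SM_rad)

lemma pd_comm: "f \<in> SM \<Longrightarrow> pd i (pd j f) = pd j (pd i f)"
proof (induction rule: SM.induct)
  case (SM_add f g)
  then show ?case by simp
next
  case (SM_mult f g)
  then show ?case by (simp add: algebra_simps)
next
  case (SM_rad g n c d)
  then show ?case by (cases "i = j") (auto simp: algebra_simps)
qed simp_all

lemma pd_zero_open:
  assumes "f \<in> SM" "open U" "\<And>y. y \<in> U \<Longrightarrow> f y = 0" "x \<in> U"
  shows "pd i f x = 0"
proof -
  have "((\<lambda>y. 0) has_derivative (\<lambda>h. 0)) (at x)" by simp
  then have "(f has_derivative (\<lambda>h. 0)) (at x)"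
    by (rule has_derivative_transform_within_open[OF _ assms(2,4)]) (use assms(3) in auto)
  from pd_eq[OF this] show ?thesis by simp
qed

lemma iter_zero_open:
  assumes "f \<in> SM" "open U" "\<And>y. y \<in> U \<Longrightarrow> f y = 0" "x \<in> U"
  shows "iter_pd ds f x = 0"
  using assms(4)
proof (induction ds arbitrary: x)
  case Nil then show ?case using assms(3) by simp
next
  case (Cons i ds)
  show ?case using pd_zero_open[OF SM_iter[OF assms(1)] assms(2) Cons.IH Cons.prems] by simp
qed

lemma pd_parity:
  assumes "f \<in> SM" "linear R" "\<And>x. f (R x) = e * f x" "R (axis i 1) = r *\<^sub>R axis i 1"
  shows "pd i f (R x) * r = e * pd i f x"
proof -
  have F: "\<And>y. (f has_derivative frechet_derivative f (at y)) (at y)"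
    using SM_has_derivative[OF assms(1)] by blast
  have "((\<lambda>y. f (R y)) has_derivative (frechet_derivative f (at (R x)) \<circ> R)) (at x)"
    using has_derivative_compose[OF linear_imp_has_derivative[OF assms(2)] F] by (simp add: o_def)
  moreover have "((\<lambda>y. f (R y)) has_derivative (\<lambda>h. e * frechet_derivative f (at x) h)) (at x)"
    unfolding assms(3) using F[of x] by (auto intro!: derivative_eq_intros)
  ultimately have eq: "frechet_derivative f (at (R x)) \<circ> R = (\<lambda>h. e * frechet_derivative f (at x) h)"
    by (rule has_derivative_unique)
  have lin: "linear (frechet_derivative f (at (R x)))"
    using has_derivative_linear[OF F] by blast
  have "frechet_derivative f (at (R x)) (R (axis i 1)) = e * frechet_derivative f (at x) (axis i 1)"
    using fun_cong[OF eq, of "axis i 1"] by simp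
  then show ?thesis
    unfolding pd_def assms(4) linear_cmul[OF lin] by (simp add: mult.commute)
qed



definition rb :: "nat \<Rightarrow> real \<Rightarrow> real \<Rightarrow> real^3 \<Rightarrow> real" where
  "rb n c d x = bet n (c + d * (x \<bullet> x))"

lemma SM_rb [simp]: "rb n c d \<in> SM"
  unfolding rb_def[abs_def] by (rule SM_rad[OF chain_bet])

lemma pd_rb [simp]: "pd i (rb n c d) = (\<lambda>x. rb (Suc n) c d x * (2 * d * x $ i))"
  unfolding rb_def[abs_def] by (rule pd_rad[OF chain_bet])

definition wA :: "real^3 \<Rightarrow> real" where "wA = (\<lambda>x. rb 0 (-2) 1 x * rb 0 3 (-1) x)"
definition wB :: "real^3 \<Rightarrow> real" where "wB = (\<lambda>x. rb 0 (-31/10) 1 x * rb 0 (39/10) (-1) x)"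

lemma SM_wA [simp]: "wA \<in> SM" unfolding wA_def by simp
lemma SM_wB [simp]: "wB \<in> SM" unfolding wB_def by simp

definition UA :: "(real^3) set" where "UA = {x. x \<bullet> x < 2} \<union> {x. 3 < x \<bullet> x}"
definition UB :: "(real^3) set" where "UB = {x. x \<bullet> x < 31/10} \<union> {x. 39/10 < x \<bullet> x}"

lemma open_UA: "open UA" unfolding UA_def
  by (intro open_Un open_Collect_less continuous_intros)
lemma open_UB: "open UB" unfolding UB_def
  by (intro open_Un open_Collect_less continuous_intros)

lemma wA_zero: "x \<in> UA \<Longrightarrow> wA x = 0"
  unfolding UA_def wA_def rb_def by (auto simp: bet_nonpos)
lemma wB_zero: "x \<in> UB \<Longrightarrow> wB x = 0"
  unfolding UB_def wB_def rb_def by (auto simp: bet_nonpos)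

lemma iterA: "x \<in> UA \<Longrightarrow> iter_pd ds wA x = 0"
  by (rule iter_zero_open[OF SM_wA open_UA wA_zero])
lemma iterB: "x \<in> UB \<Longrightarrow> iter_pd ds wB x = 0"
  by (rule iter_zero_open[OF SM_wB open_UB wB_zero])

lemma zA: assumes "x \<in> UA"
  shows "wA x = 0" "pd a wA x = 0" "pd a (pd b wA) x = 0" "pd a (pd b (pd c wA)) x = 0"
  using iterA[OF assms, of "[]"] iterA[OF assms, of "[a]"] iterA[OF assms, of "[a,b]"] iterA[OF assms, of "[a,b,c]"]
  by simp_all
lemma zB: assumes "x \<in> UB"
  shows "wB x = 0" "pd a wB x = 0" "pd a (pd b wB) x = 0" "pd a (pd b (pd c wB)) x = 0"
  using iterB[OF assms, of "[]"] iterB[OF assms, of "[a]"] iterB[OF assms, of "[a,b]"] iterB[OF assms, of "[a,b,c]"]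
  by simp_all

lemma UA_UB: "x \<in> UA \<or> x \<in> UB"
  unfolding UA_def UB_def by auto

definition tauF :: "3 \<Rightarrow> 3 \<Rightarrow> real^3 \<Rightarrow> real" where
"tauF i j = (if i = 1 \<and> j = 1 then pd 2 (pd 2 wA)
  else if i = 2 \<and> j = 2 then (\<lambda>x. pd 1 (pd 1 wA) x + pd 3 (pd 3 wB) x)
  else if i = 3 \<and> j = 3 then pd 2 (pd 2 wB)
  else if (i = 1 \<and> j = 2) \<or> (i = 2 \<and> j = 1) then (\<lambda>x. - pd 1 (pd 2 wA) x)
  else if (i = 2 \<and> j = 3) \<or> (i = 3 \<and> j = 2) then (\<lambda>x. - pd 2 (pd 3 wB) x)
  else (\<lambda>x. 0))"

definition vA :: "real \<Rightarrow> real \<Rightarrow> real^3 \<Rightarrow> real" where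
  "vA c1 c2 = (\<lambda>x. c1 * pd 1 wA x + c2 * pd 2 wA x)"
definition vB :: "real \<Rightarrow> real^3 \<Rightarrow> real" where
  "vB c3 = (\<lambda>x. c3 * pd 3 wB x)"

definition sigF :: "real \<Rightarrow> real \<Rightarrow> real \<Rightarrow> 3 \<Rightarrow> 3 \<Rightarrow> real^3 \<Rightarrow> real" where
"sigF c1 c2 c3 i j = (if (i = 1 \<and> j = 3) \<or> (i = 3 \<and> j = 1) then (\<lambda>x. pd 2 (vA c1 c2) x - pd 2 (vB c3) x)
  else if (i = 2 \<and> j = 3) \<or> (i = 3 \<and> j = 2) then (\<lambda>x. - pd 1 (vA c1 c2) x)
  else if (i = 1 \<and> j = 2) \<or> (i = 2 \<and> j = 1) then pd 3 (vB c3)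
  else (\<lambda>x. 0))"

lemma SM_tauF: "tauF i j \<in> SM" unfolding tauF_def by simp
lemma SM_sigF: "sigF c1 c2 c3 i j \<in> SM" unfolding sigF_def vA_def vB_def by simp

lemma Ylin: "pd j (\<lambda>y. Y k y $ l) x = Y k (axis j 1) $ l"
proof -
  have "((\<lambda>y. Y k y $ l) has_derivative (\<lambda>y. Y k y $ l)) (at x)"
    unfolding Y_def
    by (rule bounded_linear_imp_has_derivative)
       (intro bounded_linear_compose[OF bounded_linear_vec_nth] bounded_bilinear.bounded_linear_right[OF bilinear_cross[THEN bilinear_conv_bounded_bilinear[THEN iffD1]]]) 
  then show ?thesis by (rule pd_via) simp
qed

definition integrand :: "real \<Rightarrow> real \<Rightarrow> real \<Rightarrow> 3 \<Rightarrow> real^3 \<Rightarrow> real" where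
"integrand c1 c2 c3 k x = (\<Sum>i\<in>UNIV. \<Sum>j\<in>UNIV. \<Sum>l\<in>UNIV.
          ((1/2) * pd l (tauF i j) x * Y k x $ l
           + tauF i l x * pd j (\<lambda>y. Y k y $ l) x) * sigF c1 c2 c3 i j x)"

definition GA1 where "GA1 = (\<lambda>x. (pd 1 (pd 2 wA) x)\<^sup>2 + (pd 1 (pd 1 wA) x)\<^sup>2)"
definition GA2 where "GA2 = (\<lambda>x. (pd 2 (pd 2 wA) x)\<^sup>2 + (pd 1 (pd 2 wA) x)\<^sup>2)"
definition GB where "GB = (\<lambda>x. (pd 3 (pd 3 wB) x)\<^sup>2 + (pd 2 (pd 3 wB) x)\<^sup>2)"
definition HA where "HA = (\<lambda>x. pd 1 (pd 2 wA) x * (pd 2 (pd 2 wA) x + pd 1 (pd 1 wA) x))"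
definition HB where "HB = (\<lambda>x. pd 2 (pd 3 wB) x * (pd 3 (pd 3 wB) x + pd 2 (pd 2 wB) x))"

lemma Yvals: "Y k (axis j 1) $ l = (if k = 1 \<and> j = 2 \<and> l = 3 then 1 else if k = 2 \<and> j = 3 \<and> l = 1 then 1 else if k = 3 \<and> j = 1 \<and> l = 2 then 1
   else if k = 2 \<and> j = 1 \<and> l = 3 then -1 else if k = 3 \<and> j = 2 \<and> l = 1 then -1 else if k = 1 \<and> j = 3 \<and> l = 2 then -1 else 0)"
  unfolding Y_def using exhaust_3[of k] exhaust_3[of j] exhaust_3[of l]
  by (auto simp: cross_components axis_def)



lemma integrand1: "integrand c1 c2 c3 1 x = c1 * GA1 x + c2 * HA x"
proof -
  have pc: "pd 1 (pd 2 wA) = pd 2 (pd 1 wA)" by (simp add: pd_comm)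
  show ?thesis
  proof (cases "x \<in> UA")
    case True
    show ?thesis using zA[OF True]
      by (simp add: integrand_def sum_3 tauF_def sigF_def vA_def vB_def Ylin Yvals GA1_def HA_def)
  next
    case False
    then have U: "x \<in> UB" using UA_UB by blast
    show ?thesis using zB[OF U]
      by (simp add: integrand_def sum_3 tauF_def sigF_def vA_def vB_def Ylin Yvals GA1_def HA_def pc power2_eq_square algebra_simps)
  qed
qed


lemma integrand2: "integrand c1 c2 c3 2 x = c1 * HA x + c2 * GA2 x + c3 * HB x"
proof -
  have pc: "pd 1 (pd 2 wA) = pd 2 (pd 1 wA)" "pd 2 (pd 3 wB) = pd 3 (pd 2 wB)" by (simp_all add: pd_comm)
  show ?thesis
  proof (cases "x \<in> UA")
    case True
    show ?thesis using zA[OF True]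
      by (simp add: pc power2_eq_square algebra_simps integrand_def sum_3 tauF_def sigF_def vA_def vB_def Ylin Yvals GA2_def HA_def HB_def)
  next
    case False
    then have U: "x \<in> UB" using UA_UB by blast
    show ?thesis using zB[OF U]
      by (simp add: integrand_def sum_3 tauF_def sigF_def vA_def vB_def Ylin Yvals GA2_def HA_def HB_def pc power2_eq_square algebra_simps)
  qed
qed


lemma integrand3: "integrand c1 c2 c3 3 x = c3 * GB x"
proof -
  have pc: "pd 1 (pd 2 wA) = pd 2 (pd 1 wA)" "pd 2 (pd 3 wB) = pd 3 (pd 2 wB)" by (simp_all add: pd_comm)
  show ?thesis
  proof (cases "x \<in> UA")
    case True
    show ?thesis using zA[OF True]
      by (simp add: pc power2_eq_square algebra_simps integrand_def sum_3 tauF_def sigF_def vA_def vB_def Ylin Yvals GB_def)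
  next
    case False
    then have U: "x \<in> UB" using UA_UB by blast
    show ?thesis using zB[OF U]
      by (simp add: integrand_def sum_3 tauF_def sigF_def vA_def vB_def Ylin Yvals GB_def pc power2_eq_square algebra_simps)
  qed
qed




lemma vec_comp: fixes F :: "'n::finite \<Rightarrow> 'm::finite \<Rightarrow> 'a \<Rightarrow> real"
  shows "(\<lambda>y. (\<chi> i j. F i j y) $ i $ j) = F i j" by simp

lemma Lin_zero: "Lin (\<lambda>x. \<chi> i j. sigF c1 c2 c3 i j x) x = 0"
  unfolding Lin_def vec_comp
  by (simp add: sum_3 sigF_def vA_def vB_def pd_comm)

lemma div_zero: "(\<Sum>i\<in>UNIV. pd i (\<lambda>y. (\<chi> i j. tauF i j y) $ i $ j) x) = 0"
  unfolding vec_comp using exhaust_3[of j]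
  by (auto simp: sum_3 tauF_def pd_comm)



definition KK :: "(real^3) set" where "KK = {x. 2 \<le> x \<bullet> x \<and> x \<bullet> x \<le> 39/10}"

lemma out_KK: "x \<notin> KK \<Longrightarrow> x \<in> UA \<and> x \<in> UB"
  unfolding KK_def UA_def UB_def by auto

lemma closed_KK: "closed KK" unfolding KK_def
  by (intro closed_Collect_conj closed_Collect_le continuous_intros)

lemma KK_A1: "KK \<subseteq> A1"
proof
  fix x :: "real^3" assume "x \<in> KK"
  then have h: "2 \<le> x \<bullet> x" "x \<bullet> x \<le> 39/10" by (auto simp: KK_def)
  have "1 < sqrt (x \<bullet> x)" using h by (intro real_less_rsqrt) simp
  moreover have "sqrt (x \<bullet> x) < 2" using h by (intro real_less_lsqrt) (simp_all add: power2_eq_square)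
  ultimately show "x \<in> A1" by (simp add: A1_def norm_eq_sqrt_inner)
qed

lemma A1_box: "A1 \<subseteq> cbox (-2) 2"
proof
  fix x :: "real^3" assume "x \<in> A1"
  then have "norm x < 2" by (simp add: A1_def)
  then have "\<bar>x $ i\<bar> < 2" for i using component_le_norm_cart[of x i] by linarith
  then have "-2 \<le> x $ i \<and> x $ i \<le> 2" for i by (simp add: abs_less_iff) (smt (verit) \<open>\<And>i. \<bar>x $ i\<bar> < 2\<close>)
  then show "x \<in> cbox (-2) 2" by (simp add: mem_box_cart)
qed

lemma SM_sq [simp]: "f \<in> SM \<Longrightarrow> (\<lambda>x. (f x)\<^sup>2) \<in> SM"
  unfolding power2_eq_square by simp

lemma int_A1:
  assumes "f \<in> SM" "\<And>x. x \<notin> KK \<Longrightarrow> f x = 0"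
  shows "(f has_integral integral (cbox (-2) 2) f) A1"
proof -
  have "(f has_integral integral (cbox (-2) 2) f) (cbox (-2) 2)"
    using integrable_continuous[OF SM_cont[OF assms(1)]] by (simp add: integrable_integral)
  moreover have "(\<lambda>x. if x \<in> A1 then f x else 0) = f"
    by (rule ext) (metis assms(2) KK_A1 subsetD)
  ultimately show ?thesis
    using has_integral_restrict[OF A1_box, of f] by simp
qed

lemma pd_par:
  assumes "f \<in> SM" "linear R" "\<And>x. f (R x) = e * f x" "R (axis i 1) = r *\<^sub>R axis i 1" "r * r = 1"
  shows "pd i f (R x) = (e * r) * pd i f x"
proof -
  have h: "r * pd i f (R x) = e * pd i f x"
    using pd_parity[OF assms(1-4)] by (simp add: mult.commute)
  have "pd i f (R x) = (r * r) * pd i f (R x)" using assms(5) by simp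
  also have "\<dots> = r * (r * pd i f (R x))" by (simp add: mult.assoc)
  also have "\<dots> = (e * r) * pd i f x" using h by simp
  finally show ?thesis .
qed

definition rfl3 :: "3 \<Rightarrow> real^3 \<Rightarrow> real^3" where
  "rfl3 m x = (\<chi> k. (if k = m then -1 else 1) * x $ k)"

lemma linear_rfl3: "linear (rfl3 m)"
  by (auto simp: linear_iff vec_eq_iff rfl3_def algebra_simps)

lemma rfl3_axis: "rfl3 m (axis i 1) = (if i = m then -1 else 1) *\<^sub>R axis i 1"
  by (auto simp: vec_eq_iff rfl3_def axis_def)

lemma rfl3_inner: "rfl3 m x \<bullet> rfl3 m x = x \<bullet> x"
  unfolding inner_vec_def by (rule sum.cong) (auto simp: rfl3_def)

lemma rb_rfl3: "rb n c d (rfl3 m x) = rb n c d x"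
  by (simp add: rb_def rfl3_inner)

lemma rb_neg: "rb n c d (- x) = rb n c d x"
  by (simp add: rb_def)

lemma par_rfl3:
  assumes "f \<in> SM" "\<And>x. f (rfl3 m x) = e * f x"
  shows "pd i f (rfl3 m x) = (e * (if i = m then -1 else 1)) * pd i f x"
  by (rule pd_par[OF assms(1) linear_rfl3 assms(2) rfl3_axis]) simp

lemma linear_neg: "linear (\<lambda>x::real^3. - x)"
  by (auto simp: linear_iff)

lemma par_neg:
  assumes "f \<in> SM" "\<And>x. f (- x) = e * f x"
  shows "pd i f (- x) = (- e) * pd i f x"
  using pd_par[OF assms(1) linear_neg assms(2), of i "-1"] by simp

lemma even2:
  assumes "f \<in> SM" "\<And>x. f (- x) = f x"
  shows "pd a (pd b f) (- x) = pd a (pd b f) x"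
proof -
  have "\<And>x. pd b f (- x) = (-1) * pd b f x" using par_neg[OF assms(1), of 1] assms(2) by simp
  from par_neg[OF pd_SM[OF assms(1)] this] show ?thesis by simp
qed

lemma wA_neg: "wA (- x) = wA x" by (simp add: wA_def rb_neg)
lemma wB_neg: "wB (- x) = wB x" by (simp add: wB_def rb_neg)
lemma wA_rfl3: "wA (rfl3 m x) = 1 * wA x" by (simp add: wA_def rb_rfl3)
lemma wB_rfl3: "wB (rfl3 m x) = 1 * wB x" by (simp add: wB_def rb_rfl3)

lemma sig_even: "sigF c1 c2 c3 i j (- x) = sigF c1 c2 c3 i j x"
proof -
  note E = even2[OF SM_wA wA_neg] even2[OF SM_wB wB_neg]
  show ?thesis using exhaust_3[of i] exhaust_3[of j]
    by (elim disjE) (simp_all add: sigF_def vA_def vB_def E)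
qed

lemma tau_even: "tauF i j (- x) = tauF i j x"
proof -
  note E = even2[OF SM_wA wA_neg] even2[OF SM_wB wB_neg]
  show ?thesis using exhaust_3[of i] exhaust_3[of j]
    by (elim disjE) (simp_all add: tauF_def E)
qed

lemma sig_sym: "sigF c1 c2 c3 i j = sigF c1 c2 c3 j i"
  using exhaust_3[of i] exhaust_3[of j]
  by (elim disjE) (simp_all add: sigF_def)

lemma tau_sym: "tauF i j = tauF j i"
  using exhaust_3[of i] exhaust_3[of j]
  by (elim disjE) (simp_all add: tauF_def)

lemma HA_odd: "HA (rfl3 1 x) = - HA x"
proof -
  have p1: "\<And>x. pd 1 wA (rfl3 1 x) = (-1) * pd 1 wA x" using par_rfl3[OF SM_wA wA_rfl3] by simp
  have p2: "\<And>x. pd 2 wA (rfl3 1 x) = 1 * pd 2 wA x" using par_rfl3[OF SM_wA wA_rfl3] by simp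
  have "pd 1 (pd 2 wA) (rfl3 1 x) = - pd 1 (pd 2 wA) x" using par_rfl3[OF pd_SM[OF SM_wA] p2] by simp
  moreover have "pd 2 (pd 2 wA) (rfl3 1 x) = pd 2 (pd 2 wA) x" using par_rfl3[OF pd_SM[OF SM_wA] p2] by simp
  moreover have "pd 1 (pd 1 wA) (rfl3 1 x) = pd 1 (pd 1 wA) x" using par_rfl3[OF pd_SM[OF SM_wA] p1] by simp
  ultimately show ?thesis by (simp add: HA_def)
qed

lemma HB_odd: "HB (rfl3 3 x) = - HB x"
proof -
  have p3: "\<And>x. pd 3 wB (rfl3 3 x) = (-1) * pd 3 wB x" using par_rfl3[OF SM_wB wB_rfl3] by simp
  have p2: "\<And>x. pd 2 wB (rfl3 3 x) = 1 * pd 2 wB x" using par_rfl3[OF SM_wB wB_rfl3] by simp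
  have "pd 2 (pd 3 wB) (rfl3 3 x) = - pd 2 (pd 3 wB) x" using par_rfl3[OF pd_SM[OF SM_wB] p3] by simp
  moreover have "pd 3 (pd 3 wB) (rfl3 3 x) = pd 3 (pd 3 wB) x" using par_rfl3[OF pd_SM[OF SM_wB] p3] by simp
  moreover have "pd 2 (pd 2 wB) (rfl3 3 x) = pd 2 (pd 2 wB) x" using par_rfl3[OF pd_SM[OF SM_wB] p2] by simp
  ultimately show ?thesis by (simp add: HB_def)
qed

lemma cbox_ne: "box (-2) (2::real^3) \<noteq> {}"
proof -
  have "0 \<in> box (-2) (2::real^3)" by (simp add: mem_box_cart)
  then show ?thesis by blast
qed

lemma odd_int:
  fixes f :: "real^3 \<Rightarrow> real"
  assumes "continuous_on UNIV f" "\<And>x. f (rfl3 m x) = - f x"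
  shows "integral (cbox (-2) 2) f = 0"
proof -
  define mm where "mm = (\<lambda>k::3. if k = m then -1 else (1::real))"
  have int: "(f has_integral integral (cbox (-2) 2) f) (cbox (-2) 2)"
    using integrable_continuous[OF continuous_on_subset[OF assms(1)]] by (simp add: integrable_integral)
  have mm0: "\<And>k. mm k \<noteq> 0" by (simp add: mm_def)
  have pr: "\<bar>prod mm UNIV\<bar> = 1"
    by (simp add: abs_prod mm_def)
  have e1: "(\<lambda>x. \<chi> k. mm k * x $ k) = rfl3 m"
    by (auto simp: rfl3_def mm_def)
  have e1x: "\<And>x. (\<chi> k. mm k * x $ k) = rfl3 m x" by (simp add: rfl3_def mm_def)
  have e2: "(\<lambda>x::real^3. \<chi> k. x $ k / mm k) = rfl3 m"
    by (auto simp: rfl3_def mm_def vec_eq_iff)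
  have ne: "cbox (-2) (2::real^3) \<noteq> {}" using cbox_ne box_subset_cbox by blast
  have v1: "(\<chi> k. min (mm k * (- 2::real^3) $ k) (mm k * (2::real^3) $ k)) = - 2"
    by (auto simp: vec_eq_iff mm_def)
  have v2: "(\<chi> k. max (mm k * (- 2::real^3) $ k) (mm k * (2::real^3) $ k)) = 2"
    by (auto simp: vec_eq_iff mm_def)
  have "(\<lambda>x. \<chi> k. mm k * x $ k) ` cbox (-2) (2::real^3) = cbox (-2) 2"
    unfolding image_stretch_interval_cart if_not_P[OF ne] v1 v2 ..
  then have im: "rfl3 m ` cbox (-2) 2 = cbox (-2) 2" unfolding e1[symmetric] .
  from has_integral_stretch_cart[where m=mm, OF int mm0]
  have "((\<lambda>x. f (rfl3 m x)) has_integral integral (cbox (-2) 2) f) (cbox (-2) 2)"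
    unfolding e2 pr im by (simp add: e1x)
  then have "((\<lambda>x. - f x) has_integral integral (cbox (-2) 2) f) (cbox (-2) 2)"
    using assms(2) by simp
  moreover have "((\<lambda>x. - f x) has_integral - integral (cbox (-2) 2) f) (cbox (-2) 2)"
    using int by (rule has_integral_neg)
  ultimately have "integral (cbox (-2) 2) f = - integral (cbox (-2) 2) f"
    by (rule has_integral_unique)
  then show ?thesis by linarith
qed

lemma pos_int:
  fixes f :: "real^3 \<Rightarrow> real"
  assumes "continuous_on UNIV f" "\<And>x. 0 \<le> f x" "0 < f x0" "x0 \<in> cbox (-2) 2"
  shows "0 < integral (cbox (-2) 2) f"
proof -
  have c: "continuous_on (cbox (-2) 2) f" using assms(1) continuous_on_subset by blast
  have "integral (cbox (-2) 2) f \<noteq> 0"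
    using integral_cbox_eq_0_iff[OF c cbox_ne] assms(2-4) by auto
  moreover have "0 \<le> integral (cbox (-2) 2) f"
    by (rule integral_nonneg[OF integrable_continuous[OF c]]) (simp add: assms(2))
  ultimately show ?thesis by linarith
qed


lemma bet0: "t > 0 \<Longrightarrow> bet 0 t = exp (-1/t)"
  by (simp add: bet_def)
lemma bet1: "t > 0 \<Longrightarrow> bet (Suc 0) t = (1/t)^2 * exp (-1/t)"
  by (simp add: bet_def power2_eq_square)

definition x0A :: "real^3" where "x0A = vector [0, 0, 3/2]"
definition x0B :: "real^3" where "x0B = vector [9/5, 0, 0]"

lemma x0A_inner: "x0A \<bullet> x0A = 9/4" by (simp add: x0A_def inner_vec_def sum_3)
lemma x0B_inner: "x0B \<bullet> x0B = 81/25" by (simp add: x0B_def inner_vec_def sum_3)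

lemma x0A_c: "x0A $ 1 = 0" "x0A $ 2 = 0" "x0A $ 3 = 3/2" by (simp_all add: x0A_def)
lemma x0B_c: "x0B $ 1 = 9/5" "x0B $ 2 = 0" "x0B $ 3 = 0" by (simp_all add: x0B_def)

lemma wA11: "pd 1 (pd 1 wA) x0A = 2 * (bet 1 (1/4) * bet 0 (3/4)) - 2 * (bet 0 (1/4) * bet 1 (3/4))"
  by (simp add: wA_def x0A_c) (simp add: rb_def x0A_inner algebra_simps)

lemma wA22: "pd 2 (pd 2 wA) x0A = 2 * (bet 1 (1/4) * bet 0 (3/4)) - 2 * (bet 0 (1/4) * bet 1 (3/4))"
  by (simp add: wA_def x0A_c) (simp add: rb_def x0A_inner algebra_simps)
lemma wB33: "pd 3 (pd 3 wB) x0B = 2 * (bet 1 (7/50) * bet 0 (33/50)) - 2 * (bet 0 (7/50) * bet 1 (33/50))"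
  by (simp add: wB_def x0B_c) (simp add: rb_def x0B_inner algebra_simps)

lemma valA: "2 * (bet 1 (1/4) * bet 0 (3/4)) - 2 * (bet 0 (1/4) * bet 1 (3/4)) > (0::real)"
proof -
  have eq: "2 * (bet 1 (1/4) * bet 0 (3/4)) - 2 * (bet 0 (1/4) * bet 1 (3/4)) = (256/9) * (exp (-4) * exp (-4/3))"
    by (simp add: bet0 bet1 power2_eq_square)
  show ?thesis unfolding eq by (intro mult_pos_pos) simp_all
qed

lemma valB: "2 * (bet 1 (7/50) * bet 0 (33/50)) - 2 * (bet 0 (7/50) * bet 1 (33/50)) > (0::real)"
proof -
  have eq: "2 * (bet 1 (7/50) * bet 0 (33/50)) - 2 * (bet 0 (7/50) * bet 1 (33/50)) = 2 * ((50/7)^2 - (50/33)^2) * (exp (-50/7) * exp (-50/33))"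
    by (simp add: bet0 bet1 power2_eq_square algebra_simps)
  show ?thesis unfolding eq by (intro mult_pos_pos) (simp_all add: power2_eq_square)
qed

lemma GA1_pos: "0 < GA1 x0A"
  using valA unfolding GA1_def wA11 by (simp add: add_nonneg_pos)
lemma GA2_pos: "0 < GA2 x0A"
  using valA unfolding GA2_def wA22 by (simp add: add_pos_nonneg)
lemma GB_pos: "0 < GB x0B"
  using valB unfolding GB_def wB33 by (simp add: add_pos_nonneg)

lemma x0A_box: "x0A \<in> cbox (-2) 2"
  by (simp add: mem_box_cart forall_3 x0A_c)
lemma x0B_box: "x0B \<in> cbox (-2) 2"
  by (simp add: mem_box_cart forall_3 x0B_c)

lemma SM_G: "GA1 \<in> SM" "GA2 \<in> SM" "GB \<in> SM" "HA \<in> SM" "HB \<in> SM"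
  by (simp_all add: GA1_def GA2_def GB_def HA_def HB_def)

lemma G_out: assumes "x \<notin> KK" shows "GA1 x = 0 \<and> GA2 x = 0 \<and> GB x = 0 \<and> HA x = 0 \<and> HB x = 0"
proof -
  have U: "x \<in> UA" "x \<in> UB" using out_KK[OF assms] by auto
  note Z = zA[OF U(1)] zB[OF U(2)]
  show ?thesis by (simp add: GA1_def GA2_def GB_def HA_def HB_def Z)
qed

definition P1 where "P1 = integral (cbox (-2) 2) GA1"
definition P2 where "P2 = integral (cbox (-2) 2) GA2"
definition P3 where "P3 = integral (cbox (-2) 2) GB"

lemma P1_pos: "0 < P1"
  unfolding P1_def
  by (rule pos_int[OF SM_cont[OF SM_G(1)] _ GA1_pos x0A_box]) (simp add: GA1_def)
lemma P2_pos: "0 < P2"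
  unfolding P2_def
  by (rule pos_int[OF SM_cont[OF SM_G(2)] _ GA2_pos x0A_box]) (simp add: GA2_def)
lemma P3_pos: "0 < P3"
  unfolding P3_def
  by (rule pos_int[OF SM_cont[OF SM_G(3)] _ GB_pos x0B_box]) (simp add: GB_def)

lemma hasA1: "(GA1 has_integral P1) A1" "(GA2 has_integral P2) A1" "(GB has_integral P3) A1"
   "(HA has_integral 0) A1" "(HB has_integral 0) A1"
  unfolding P1_def P2_def P3_def
proof -
  show "(GA1 has_integral integral (cbox (-2) 2) GA1) A1" by (rule int_A1[OF SM_G(1)]) (use G_out in blast)
  show "(GA2 has_integral integral (cbox (-2) 2) GA2) A1" by (rule int_A1[OF SM_G(2)]) (use G_out in blast)
  show "(GB has_integral integral (cbox (-2) 2) GB) A1" by (rule int_A1[OF SM_G(3)]) (use G_out in blast)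
  have "(HA has_integral integral (cbox (-2) 2) HA) A1" by (rule int_A1[OF SM_G(4)]) (use G_out in blast)
  then show "(HA has_integral 0) A1" using odd_int[OF SM_cont[OF SM_G(4)] HA_odd] by simp
  have "(HB has_integral integral (cbox (-2) 2) HB) A1" by (rule int_A1[OF SM_G(5)]) (use G_out in blast)
  then show "(HB has_integral 0) A1" using odd_int[OF SM_cont[OF SM_G(5)] HB_odd] by simp
qed




lemma sig_out: assumes "x \<notin> KK" shows "sigF c1 c2 c3 i j x = 0"
proof -
  have U: "x \<in> UA" "x \<in> UB" using out_KK[OF assms] by auto
  note Z = zA[OF U(1)] zB[OF U(2)]
  show ?thesis using exhaust_3[of i] exhaust_3[of j]
    by (elim disjE) (simp_all add: sigF_def vA_def vB_def Z)
qed
lemma tau_out: assumes "x \<notin> KK" shows "tauF i j x = 0"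
proof -
  have U: "x \<in> UA" "x \<in> UB" using out_KK[OF assms] by auto
  note Z = zA[OF U(1)] zB[OF U(2)]
  show ?thesis using exhaust_3[of i] exhaust_3[of j]
    by (elim disjE) (simp_all add: tauF_def Z)
qed

lemma supp:
  assumes "\<And>x i j. x \<notin> KK \<Longrightarrow> F i j x = 0"
  shows "compact (tsupport (\<lambda>x. \<chi> i j. F i j x)) \<and> tsupport (\<lambda>x. \<chi> i j. F i j x) \<subseteq> A1"
proof -
  have sub: "{x. (\<chi> i j. F i j x) \<noteq> 0} \<subseteq> KK"
  proof
    fix x assume "x \<in> {x. (\<chi> i j. F i j x) \<noteq> 0}"
    then show "x \<in> KK" using assms by (auto simp: vec_eq_iff)
  qed
  have cl: "closure {x. (\<chi> i j. F i j x) \<noteq> 0} \<subseteq> KK"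
    by (rule closure_minimal[OF sub closed_KK])
  have "bounded KK" by (rule bounded_subset[OF bounded_cbox]) (use KK_A1 A1_box in blast)
  then have "bounded {x. (\<chi> i j. F i j x) \<noteq> 0}" using sub bounded_subset by blast
  then show ?thesis using cl KK_A1 unfolding tsupport_def by auto
qed

theorem theorem2p7:
  fixes lam :: "real^3"
  shows "\<exists>\<sigma> \<tau> :: real^3 \<Rightarrow> real^3^3.
    smooth_sym_tensor \<sigma> \<and> smooth_sym_tensor \<tau> \<and>
    compact (tsupport \<sigma>) \<and> tsupport \<sigma> \<subseteq> A1 \<and>
    compact (tsupport \<tau>) \<and> tsupport \<tau> \<subseteq> A1 \<and>
    (\<forall>x. \<sigma> (-x) = \<sigma> x) \<and> (\<forall>x. \<tau> (-x) = \<tau> x) \<and>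
    (\<forall>x. Lin \<sigma> x = 0) \<and>
    (\<forall>j x. (\<Sum>i\<in>UNIV. pd i (\<lambda>y. \<tau> y $ i $ j) x) = 0) \<and>
    (\<forall>k. integral A1 (\<lambda>x. \<Sum>i\<in>UNIV. \<Sum>j\<in>UNIV. \<Sum>l\<in>UNIV.
          ((1/2) * pd l (\<lambda>y. \<tau> y $ i $ j) x * Y k x $ l
           + \<tau> x $ i $ l * pd j (\<lambda>y. Y k y $ l) x) * \<sigma> x $ i $ j) = lam $ k)"
proof -
  define c1 where "c1 = lam $ 1 / P1"
  define c2 where "c2 = lam $ 2 / P2"
  define c3 where "c3 = lam $ 3 / P3"
  define \<sigma> where "\<sigma> = (\<lambda>x. \<chi> i j. sigF c1 c2 c3 i j x)"
  define \<tau> where "\<tau> = (\<lambda>x. \<chi> i j. tauF i j x)"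
  have s1: "smooth_sym_tensor \<sigma>"
    unfolding smooth_sym_tensor_def \<sigma>_def vec_comp
    using SM_smooth[OF SM_sigF] sig_sym by simp
  have s2: "smooth_sym_tensor \<tau>"
    unfolding smooth_sym_tensor_def \<tau>_def vec_comp
    using SM_smooth[OF SM_tauF] tau_sym by simp
  have s3: "compact (tsupport \<sigma>) \<and> tsupport \<sigma> \<subseteq> A1"
    unfolding \<sigma>_def by (rule supp) (rule sig_out)
  have s4: "compact (tsupport \<tau>) \<and> tsupport \<tau> \<subseteq> A1"
    unfolding \<tau>_def by (rule supp) (rule tau_out)
  have s5: "\<forall>x. \<sigma> (-x) = \<sigma> x" unfolding \<sigma>_def by (simp add: sig_even)
  have s6: "\<forall>x. \<tau> (-x) = \<tau> x" unfolding \<tau>_def by (simp add: tau_even)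
  have s7: "\<forall>x. Lin \<sigma> x = 0" unfolding \<sigma>_def by (simp add: Lin_zero)
  have s8: "\<forall>j x. (\<Sum>i\<in>UNIV. pd i (\<lambda>y. \<tau> y $ i $ j) x) = 0" unfolding \<tau>_def using div_zero by blast
  have eqi: "(\<lambda>x. \<Sum>i\<in>UNIV. \<Sum>j\<in>UNIV. \<Sum>l\<in>UNIV.
          ((1/2) * pd l (\<lambda>y. \<tau> y $ i $ j) x * Y k x $ l
           + \<tau> x $ i $ l * pd j (\<lambda>y. Y k y $ l) x) * \<sigma> x $ i $ j) = integrand c1 c2 c3 k" for k
    unfolding \<sigma>_def \<tau>_def vec_comp by (simp add: integrand_def[abs_def])
  have i1: "(integrand c1 c2 c3 1 has_integral lam $ 1) A1"
  proof -
    have "((\<lambda>x. c1 * GA1 x + c2 * HA x) has_integral c1 * P1 + c2 * 0) A1"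
      by (intro has_integral_add has_integral_mult_right hasA1)
    then show ?thesis using P1_pos by (simp add: integrand1[abs_def] c1_def)
  qed
  have i2: "(integrand c1 c2 c3 2 has_integral lam $ 2) A1"
  proof -
    have "((\<lambda>x. c1 * HA x + c2 * GA2 x + c3 * HB x) has_integral c1 * 0 + c2 * P2 + c3 * 0) A1"
      by (intro has_integral_add has_integral_mult_right hasA1)
    then show ?thesis using P2_pos by (simp add: integrand2[abs_def] c2_def)
  qed
  have i3: "(integrand c1 c2 c3 3 has_integral lam $ 3) A1"
  proof -
    have "((\<lambda>x. c3 * GB x) has_integral c3 * P3) A1"
      by (intro has_integral_mult_right hasA1)
    then show ?thesis using P3_pos by (simp add: integrand3[abs_def] c3_def)
  qed
  have s9: "\<forall>k. integral A1 (\<lambda>x. \<Sum>i\<in>UNIV. \<Sum>j\<in>UNIV. \<Sum>l\<in>UNIV.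
          ((1/2) * pd l (\<lambda>y. \<tau> y $ i $ j) x * Y k x $ l
           + \<tau> x $ i $ l * pd j (\<lambda>y. Y k y $ l) x) * \<sigma> x $ i $ j) = lam $ k"
  proof
    fix k :: 3
    show "integral A1 (\<lambda>x. \<Sum>i\<in>UNIV. \<Sum>j\<in>UNIV. \<Sum>l\<in>UNIV.
          ((1/2) * pd l (\<lambda>y. \<tau> y $ i $ j) x * Y k x $ l
           + \<tau> x $ i $ l * pd j (\<lambda>y. Y k y $ l) x) * \<sigma> x $ i $ j) = lam $ k"
      unfolding eqi using exhaust_3[of k] i1 i2 i3 integral_unique by metis
  qed
  show ?thesis
    by (rule exI[of _ \<sigma>], rule exI[of _ \<tau>]) (use s1 s2 s3 s4 s5 s6 s7 s8 s9 in blast)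
qed


end
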